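(* If $G$ is a connected graph that is not a path, then the detour sequence of $G$ has a repetition of length at least three; that is, some value occurs at least three times in the detour sequence of $G$.
   Context: All graphs are finite and simple. The order of a path is its number of vertices. For a vertex $v$ of $G$, $\tau(v)$ is the order of a longest path in $G$ having $v$ as an endvertex. The detour sequence of $G$ is the nondecreasing sequence of the values $\tau(v)$, $v\in V(G)$ (one term per vertex). A repetition is a maximal block of at least two consecutive equal terms of the sequence; its length is the number of terms in the block. *)

theory Defs
  imports Main
begin

definition simple_graph :: "'a set \<Rightarrow> ('a \<Rightarrow> 'a \<Rightarrow> bool) \<Rightarrow> bool" where
  "simple_graph V E \<longleftrightarrow> finite V \<and> (\<forall>u v. E u v \<longrightarrow> u \<in> V \<and> v \<in> V)
     \<and> (\<forall>u v. E u v \<longrightarrow> E v u) \<and> (\<forall>v. \<not> E v v)"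

text \<open>A path in G, given as the list of its vertices (order = length).\<close>
definition is_path :: "'a set \<Rightarrow> ('a \<Rightarrow> 'a \<Rightarrow> bool) \<Rightarrow> 'a list \<Rightarrow> bool" where
  "is_path V E p \<longleftrightarrow> p \<noteq> [] \<and> distinct p \<and> set p \<subseteq> V
     \<and> (\<forall>i. Suc i < length p \<longrightarrow> E (p ! i) (p ! Suc i))"

definition connected_graph :: "'a set \<Rightarrow> ('a \<Rightarrow> 'a \<Rightarrow> bool) \<Rightarrow> bool" where
  "connected_graph V E \<longleftrightarrow> V \<noteq> {} \<and>
     (\<forall>u\<in>V. \<forall>v\<in>V. \<exists>p. is_path V E p \<and> hd p = u \<and> last p = v)"

text \<open>G is (isomorphic to) a path graph: its vertices can be listed so that
  two vertices are adjacent iff they are consecutive in the list.\<close>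
definition is_path_graph :: "'a set \<Rightarrow> ('a \<Rightarrow> 'a \<Rightarrow> bool) \<Rightarrow> bool" where
  "is_path_graph V E \<longleftrightarrow> (\<exists>p. distinct p \<and> set p = V \<and>
     (\<forall>i<length p. \<forall>j<length p. E (p ! i) (p ! j) \<longleftrightarrow> (j = Suc i \<or> i = Suc j)))"

definition tau :: "'a set \<Rightarrow> ('a \<Rightarrow> 'a \<Rightarrow> bool) \<Rightarrow> 'a \<Rightarrow> nat" where
  "tau V E v = Max {length p | p. is_path V E p \<and> hd p = v}"

end

theory Submission imports Defs begin

lemma sg_sym: "simple_graph V E \<Longrightarrow> E u v \<Longrightarrow> E v u"
  by (simp add: simple_graph_def)

lemma path_rev: assumes "simple_graph V E" "is_path V E p" shows "is_path V E (rev p)"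
  unfolding is_path_def
proof (intro conjI allI impI)
  show "rev p \<noteq> []" "distinct (rev p)" "set (rev p) \<subseteq> V" using assms(2) by (auto simp: is_path_def)
  fix i assume i: "Suc i < length (rev p)"
  define k where "k = length p - Suc (Suc i)"
  have "Suc k < length p" using i by (simp add: k_def)
  hence "E (p ! k) (p ! Suc k)" using assms(2) by (simp add: is_path_def)
  moreover have "rev p ! i = p ! Suc k" "rev p ! Suc i = p ! k" using i
    by (auto simp: rev_nth k_def Suc_diff_Suc)
  ultimately show "E (rev p ! i) (rev p ! Suc i)" using sg_sym[OF assms(1)] by metis
qed

lemma path_drop: "is_path V E p \<Longrightarrow> i < length p \<Longrightarrow> is_path V E (drop i p)"
  unfolding is_path_def using set_drop_subset[of i p] by (auto simp: nth_drop)

lemma path_take: "is_path V E p \<Longrightarrow> 0 < k \<Longrightarrow> is_path V E (take k p)"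
  unfolding is_path_def using set_take_subset[of k p] by (auto simp: nth_take)

lemma path_append: assumes "is_path V E p" "is_path V E q" "set p \<inter> set q = {}" "E (last p) (hd q)"
  shows "is_path V E (p @ q)"
  unfolding is_path_def
proof (intro conjI allI impI)
  show "p @ q \<noteq> []" "distinct (p @ q)" "set (p @ q) \<subseteq> V" using assms by (auto simp: is_path_def)
  fix i assume i: "Suc i < length (p @ q)"
  consider "Suc i < length p" | "Suc i = length p" | "length p \<le> i" by linarith
  then show "E ((p @ q) ! i) ((p @ q) ! Suc i)"
  proof cases
    case 1 then show ?thesis using assms(1) by (simp add: nth_append is_path_def)
  next
    case 2
    have "p \<noteq> []" "q \<noteq> []" using assms by (auto simp: is_path_def)
    then have "i = length p - 1" using 2 by simp
    then show ?thesis using 2 assms(4) \<open>p \<noteq> []\<close> \<open>q \<noteq> []\<close> by (simp add: nth_append last_conv_nth hd_conv_nth)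
  next
    case 3
    then have "Suc (i - length p) < length q" using i by simp
    then have "E (q ! (i - length p)) (q ! Suc (i - length p))" using assms(2) by (simp add: is_path_def)
    then show ?thesis using 3 by (simp add: nth_append Suc_diff_le)
  qed
qed

lemma path_len: "simple_graph V E \<Longrightarrow> is_path V E p \<Longrightarrow> length p \<le> card V"
  unfolding is_path_def simple_graph_def by (metis card_mono distinct_card)

lemma fin_lens: "simple_graph V E \<Longrightarrow> finite {length p | p. is_path V E p \<and> P p}"
  by (rule finite_subset[of _ "{..card V}"]) (auto dest: path_len)

lemma tau_ge: "simple_graph V E \<Longrightarrow> is_path V E p \<Longrightarrow> length p \<le> tau V E (hd p)"
  unfolding tau_def by (rule Max_ge[OF fin_lens]) auto

lemma tau_ex: assumes "simple_graph V E" "v \<in> V"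
  shows "\<exists>p. is_path V E p \<and> hd p = v \<and> tau V E v = length p"
proof -
  have "is_path V E [v]" using assms(2) by (simp add: is_path_def)
  then have "{length p | p. is_path V E p \<and> hd p = v} \<noteq> {}" by force
  from Max_in[OF fin_lens[OF assms(1)] this] show ?thesis unfolding tau_def by force
qed

lemma exit_lemma: "q \<noteq> [] \<Longrightarrow> hd q \<notin> S \<Longrightarrow> last q \<in> S \<Longrightarrow> \<exists>k. Suc k < length q \<and> q ! k \<notin> S \<and> q ! Suc k \<in> S"
proof (induction q)
  case Nil then show ?case by simp
next
  case (Cons a q)
  show ?case
  proof (cases "q = []")
    case True then show ?thesis using Cons by simp
  next
    case False
    show ?thesis
    proof (cases "hd q \<in> S")
      case True then show ?thesis using Cons.prems False by (intro exI[of _ 0]) (auto simp: hd_conv_nth)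
    next
      case F: False
      from Cons.IH[OF False F] Cons.prems False obtain k where "Suc k < length q" "q ! k \<notin> S" "q ! Suc k \<in> S" by auto
      then show ?thesis by (intro exI[of _ "Suc k"]) auto
    qed
  qed
qed

theorem theorem1p10:
  fixes V :: "'a set" and E :: "'a \<Rightarrow> 'a \<Rightarrow> bool"
  assumes "simple_graph V E"
    and "connected_graph V E"
    and "\<not> is_path_graph V E"
  shows "\<exists>v\<in>V. card {u \<in> V. tau V E u = tau V E v} \<ge> 3"
proof (rule ccontr)
  assume H: "\<not> ?thesis"
  have H2: "card {u \<in> V. tau V E u = tau V E v} \<le> 2" if "v \<in> V" for v
    using H that by force
  have sg: "simple_graph V E" by fact
  have finV: "finite V" using sg by (simp add: simple_graph_def)
  have symE: "\<And>u v. E u v \<Longrightarrow> E v u" using sg by (simp add: simple_graph_def)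
  have irr: "\<And>v. \<not> E v v" using sg by (simp add: simple_graph_def)
  obtain v0 where v0: "v0 \<in> V" using assms(2) by (auto simp: connected_graph_def)
  define Ls where "Ls = {length p | p. is_path V E p \<and> True}"
  have finLs: "finite Ls" unfolding Ls_def by (rule fin_lens[OF sg])
  have "is_path V E [v0]" using v0 by (simp add: is_path_def)
  then have "Ls \<noteq> {}" unfolding Ls_def by force
  define L where "L = Max Ls"
  obtain P where P: "is_path V E P" "length P = L"
    using Max_in[OF finLs \<open>Ls \<noteq> {}\<close>] unfolding L_def Ls_def by force
  have Lmax: "length p \<le> L" if "is_path V E p" for p
    unfolding L_def using that by (intro Max_ge[OF finLs]) (auto simp: Ls_def)
  have tauL: "tau V E v \<le> L" if "v \<in> V" for v
    using tau_ex[OF sg that] Lmax by force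
  have distP: "distinct P" and setP: "set P \<subseteq> V" using P by (auto simp: is_path_def)
  have PV: "P ! i \<in> V" if "i < L" for i using setP that P(2) by auto
  have tauP: "i + 1 \<le> tau V E (P ! i) \<and> L - i \<le> tau V E (P ! i)" if i: "i < L" for i
  proof
    have "is_path V E (rev (take (Suc i) P))" using path_rev[OF sg path_take[OF P(1)]] by simp
    moreover have "hd (rev (take (Suc i) P)) = P ! i" using i P(2)
      by (simp add: hd_rev take_Suc_conv_app_nth)
    moreover have "length (rev (take (Suc i) P)) = i + 1" using i P(2) by simp
    ultimately show "i + 1 \<le> tau V E (P ! i)" using tau_ge[OF sg] by metis
    have "is_path V E (drop i P)" using path_drop[OF P(1)] i P(2) by simp
    moreover have "hd (drop i P) = P ! i" using i P(2) by (simp add: hd_drop_conv_nth)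
    moreover have "length (drop i P) = L - i" using P(2) by simp
    ultimately show "L - i \<le> tau V E (P ! i)" using tau_ge[OF sg] by metis
  qed
  define A where "A t = (\<lambda>i. P ! i) ` {i. i < L \<and> (t - 1 \<le> i \<or> i \<le> L - t)}" for t
  have key: False if w: "w \<in> V" "tau V E w = t" "L + 2 \<le> 2 * t" "w \<notin> A t" for w t
  proof -
    have tL: "t \<le> L" using tauL w by auto
    have idx: "{i. i < L \<and> (t - 1 \<le> i \<or> i \<le> L - t)} = {t - 1..<L} \<union> {..L - t}"
      using tL w(3) by auto
    have "card ({t - 1..<L} \<union> {..L - t}) = (L - (t - 1)) + (L - t + 1)"
      using w(3) by (subst card_Un_disjoint) auto
    also have "\<dots> = 2 * (L - t + 1)" using w(3) tL by simp
    finally have cA: "card (A t) = 2 * (L - t + 1)"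
      unfolding A_def idx using P(2) distP w(3) tL
      by (subst card_image) (auto intro!: inj_on_nth)
    define U where "U = {u \<in> V. t \<le> tau V E u}"
    have "A t \<subseteq> U"
    proof
      fix x assume "x \<in> A t"
      then obtain i where i: "i < L" "t - 1 \<le> i \<or> i \<le> L - t" "x = P ! i" unfolding A_def by auto
      then show "x \<in> U" using tauP[OF i(1)] PV[OF i(1)] tL unfolding U_def by auto
    qed
    then have sub: "insert w (A t) \<subseteq> U" using w unfolding U_def by auto
    have finU: "finite U" using finV unfolding U_def by auto
    have "card (insert w (A t)) = 2 * (L - t + 1) + 1"
      using cA w(4) finite_subset[OF sub finU] by simp
    then have c1: "2 * (L - t + 1) + 1 \<le> card U" using card_mono[OF finU sub] by simp
    have "U \<subseteq> (\<Union>c\<in>{t..L}. {u \<in> V. tau V E u = c})" unfolding U_def using tauL by auto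
    then have "card U \<le> card (\<Union>c\<in>{t..L}. {u \<in> V. tau V E u = c})"
      by (intro card_mono) (auto simp: finV)
    also have "\<dots> \<le> (\<Sum>c\<in>{t..L}. card {u \<in> V. tau V E u = c})" by (rule card_UN_le) simp
    also have "\<dots> \<le> (\<Sum>c\<in>{t..L}. 2)"
    proof (rule sum_mono)
      fix c assume "c \<in> {t..L}"
      show "card {u \<in> V. tau V E u = c} \<le> 2"
      proof (cases "\<exists>v\<in>V. tau V E v = c")
        case True
        then obtain v where "v \<in> V" "tau V E v = c" by auto
        then show ?thesis using H2[of v] by simp
      next
        case False
        then have "{u \<in> V. tau V E u = c} = {}" by auto
        then show ?thesis by (metis card.empty le0)
      qed
    qed
    also have "\<dots> = 2 * (L - t + 1)" using tL by simp
    finally show False using c1 by simp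
  qed
  have Pne: "P \<noteq> []" using P by (simp add: is_path_def)
  have ham: "set P = V"
  proof (rule ccontr)
    assume "set P \<noteq> V"
    then obtain x where x: "x \<in> V" "x \<notin> set P" using setP by auto
    have "hd P \<in> V" using Pne setP by auto
    then obtain q where q: "is_path V E q" "hd q = x" "last q = hd P"
      using assms(2) x unfolding connected_graph_def by blast
    have "q \<noteq> []" using q by (simp add: is_path_def)
    then obtain k where k: "Suc k < length q" "q ! k \<notin> set P" "q ! Suc k \<in> set P"
      using exit_lemma[of q "set P"] q x Pne by auto
    define w where "w = q ! k"
    have wV: "w \<in> V" using k q(1) unfolding w_def is_path_def by auto
    have Ew: "E w (q ! Suc k)" using k q(1) unfolding w_def is_path_def by auto
    obtain i where i: "i < L" "P ! i = q ! Suc k" using k(3) P(2) by (auto simp: in_set_conv_nth)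
    have pw: "is_path V E [w]" using wV by (simp add: is_path_def)
    have wP: "w \<notin> set P" using k w_def by simp
    have "is_path V E ([w] @ drop i P)"
      using pw path_drop[OF P(1), of i] i P(2) wP set_drop_subset[of i P] Ew
      by (intro path_append) (auto simp: hd_drop_conv_nth)
    then have t1: "L - i + 1 \<le> tau V E w" using tau_ge[OF sg, of "[w] @ drop i P"] P(2) by simp
    have "is_path V E ([w] @ rev (take (Suc i) P))"
      using pw path_rev[OF sg path_take[OF P(1)], of "Suc i"] i P(2) wP set_take_subset[of "Suc i" P] Ew
      by (intro path_append) (auto simp: hd_rev take_Suc_conv_app_nth)
    then have t2: "i + 2 \<le> tau V E w" using tau_ge[OF sg, of "[w] @ rev (take (Suc i) P)"] P(2) i by simp
    have "w \<notin> A (tau V E w)" unfolding A_def using wP P(2) by auto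
    then show False using key[OF wV refl] t1 t2 i by linarith
  qed
  have notA: "P ! m \<notin> A t" if "m < L" "m + 1 < t" "L - m < t" "t \<le> L" for m t
  proof
    assume "P ! m \<in> A t"
    then obtain i where i: "i < L" "t - 1 \<le> i \<or> i \<le> L - t" "P ! m = P ! i" unfolding A_def by auto
    then have "i = m" using distP P(2) that(1) nth_eq_iff_index_eq by metis
    then show False using i that by arith
  qed
  have chord: False if ab: "a + 2 \<le> b" "b < L" "E (P ! a) (P ! b)" for a b
  proof (cases "L \<le> a + b + 1")
    case True
    define q1 where "q1 = take (b - a) (drop (a + 1) P)"
    define q2 where "q2 = rev (take (a + 1) P)"
    have p1: "is_path V E q1" unfolding q1_def
      using path_take[OF path_drop[OF P(1)]] ab P(2) by simp
    have p2: "is_path V E q2" unfolding q2_def using path_rev[OF sg path_take[OF P(1)]] by simp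
    have d: "set q1 \<inter> set q2 = {}" unfolding q1_def q2_def
      using set_take_subset[of "b - a" "drop (a + 1) P"] set_take_disj_set_drop_if_distinct[OF distP, of "a+1" "a+1"]
      by auto
    have l1: "last q1 = P ! b" unfolding q1_def using ab P(2) by (simp add: last_conv_nth)
    have h1: "hd q1 = P ! (a + 1)" unfolding q1_def using ab P(2) by (simp add: hd_drop_conv_nth)
    have h2: "hd q2 = P ! a" unfolding q2_def using ab P(2) by (simp add: hd_rev take_Suc_conv_app_nth)
    have "is_path V E (q1 @ q2)" using p1 p2 d l1 h2 ab symE by (intro path_append) auto
    moreover have "hd (q1 @ q2) = P ! (a + 1)" using h1 p1 by (simp add: is_path_def)
    moreover have "length (q1 @ q2) = b + 1" unfolding q1_def q2_def using ab P(2) by simp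
    ultimately have t: "b + 1 \<le> tau V E (P ! (a + 1))" using tau_ge[OF sg, of "q1 @ q2"] by metis
    show False using key[OF PV refl, of "a + 1"] notA[of "a + 1" "tau V E (P ! (a + 1))"] tauL[OF PV, of "a + 1"] t ab True
      by linarith
  next
    case False
    define q1 where "q1 = rev (take (b - a) (drop a P))"
    define q2 where "q2 = drop b P"
    have p1: "is_path V E q1" unfolding q1_def
      using path_rev[OF sg path_take[OF path_drop[OF P(1)]]] ab P(2) by simp
    have p2: "is_path V E q2" unfolding q2_def using path_drop[OF P(1)] ab P(2) by simp
    have eq: "take (b - a) (drop a P) = drop a (take b P)" using ab by (simp add: take_drop)
    have d: "set q1 \<inter> set q2 = {}" unfolding q1_def q2_def eq
      using set_drop_subset[of a "take b P"] set_take_disj_set_drop_if_distinct[OF distP, of b b]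
      by auto
    have l1: "last q1 = P ! a" unfolding q1_def using ab P(2) by (simp add: last_rev hd_drop_conv_nth)
    have h1: "hd q1 = P ! (b - 1)" unfolding q1_def using ab P(2) by (simp add: hd_rev last_conv_nth)
    have h2: "hd q2 = P ! b" unfolding q2_def using ab P(2) by (simp add: hd_drop_conv_nth)
    have "is_path V E (q1 @ q2)" using p1 p2 d l1 h2 ab by (intro path_append) auto
    moreover have "hd (q1 @ q2) = P ! (b - 1)" using h1 p1 by (simp add: is_path_def)
    moreover have "length (q1 @ q2) = L - a" unfolding q1_def q2_def using ab P(2) by simp
    ultimately have t: "L - a \<le> tau V E (P ! (b - 1))" using tau_ge[OF sg, of "q1 @ q2"] by metis
    show False using key[OF PV refl, of "b - 1"] notA[of "b - 1" "tau V E (P ! (b - 1))"] tauL[OF PV, of "b - 1"] t ab False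
      by linarith
  qed
  obtain i j where ij: "i < L" "j < L" "\<not> (E (P ! i) (P ! j) \<longleftrightarrow> (j = Suc i \<or> i = Suc j))"
    using assms(3) distP ham P(2) unfolding is_path_graph_def by blast
  have Ec: "E (P ! k) (P ! Suc k)" if "Suc k < L" for k using P that by (simp add: is_path_def)
  show False
  proof (cases "j = Suc i \<or> i = Suc j")
    case True then show ?thesis using ij Ec symE by auto
  next
    case False
    then have E1: "E (P ! i) (P ! j)" using ij by simp
    have "i \<noteq> j" using E1 irr by auto
    then consider "i + 2 \<le> j" | "j + 2 \<le> i" using False by linarith
    then show ?thesis
    proof cases
      case 1 then show ?thesis using chord[of i j] ij E1 by simp
    next
      case 2 then show ?thesis using chord[of j i] ij E1 symE by simp
    qed
  qed
qed

end
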